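(* For every integer $k\ge2$, with $p_k:=2^{1-k}$, $$p_k\,G\!\left(\frac{k^2+k+1}{(2k+1)^2}\right)+(1-p_k)\,G\!\left(\frac{k^2+k-1}{(2k+1)^2}\right)\ \ge\ G\!\left(\tfrac14\right),$$ and moreover $$p_k\,G\!\left(\frac{k^2+k+1}{(2k+1)^2}\right)+(1-p_k)\cdot\frac12\ \ge\ G\!\left(\tfrac14\right).$$
   Context: $\Phi$ denotes the standard normal distribution function. For $c>0$, $G(c):=\frac12\left(1-\frac12\,\frac{1-\Phi(c^{-1/2})}{1-\Phi(\sqrt2)}\right)$. *)

theory Defs
  imports "HOL-Probability.Probability"
begin

definition Phi :: "real \<Rightarrow> real" where
  "Phi x = (LINT t:{..x}|lborel. std_normal_density t)"

definition G :: "real \<Rightarrow> real" where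
  "G c = (1/2) * (1 - (1/2) * ((1 - Phi (1 / sqrt c)) / (1 - Phi (sqrt 2))))"

end

theory Submission
  imports Defs
begin

lemma phi_int: "A \<in> sets borel \<Longrightarrow> set_integrable lborel A std_normal_density"
  unfolding set_integrable_def
  by (rule integrable_mult_indicator) auto

lemma Phi_diff: assumes "a \<le> b"
  shows "Phi b - Phi a = (LINT t:{a<..b}|lborel. std_normal_density t)"
proof -
  have e: "{..b} = {..a} \<union> {a<..b}" using assms by auto
  have "Phi b = Phi a + (LINT t:{a<..b}|lborel. std_normal_density t)"
    unfolding Phi_def e by (rule set_integral_Un) (auto intro: phi_int)
  thus ?thesis by simp
qed

lemma Phi_le1: "Phi x \<le> 1"
proof -
  have "Phi x \<le> integral\<^sup>L lborel std_normal_density"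
    unfolding Phi_def set_lebesgue_integral_def
    by (intro integral_mono integrable_mult_indicator) (auto simp: indicator_def)
  also have "\<dots> = 1" using integral_std_normal_moment_even[of 0] by simp
  finally show ?thesis .
qed

lemma Phi_bounds: assumes "0 \<le> a" "a \<le> b"
  shows "(b - a) * std_normal_density b \<le> Phi b - Phi a"
    "Phi b - Phi a \<le> (b - a) * std_normal_density a"
proof -
  have mono: "std_normal_density y \<le> std_normal_density x" if "0 \<le> x" "x \<le> y" for x y
  proof -
    have "x^2 \<le> y^2" using that by (simp add: power_mono)
    thus ?thesis by (simp add: std_normal_density_def divide_right_mono)
  qed
  have m: "measure lborel {a<..b} = b - a" using assms by simp
  have "(LINT t:{a<..b}|lborel. std_normal_density b) \<le> (LINT t:{a<..b}|lborel. std_normal_density t)"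
    using assms by (intro set_integral_mono phi_int) (auto intro!: mono simp: set_integrable_def)
  thus "(b - a) * std_normal_density b \<le> Phi b - Phi a"
    using assms by (simp add: Phi_diff set_integral_const m)
  have "(LINT t:{a<..b}|lborel. std_normal_density t) \<le> (LINT t:{a<..b}|lborel. std_normal_density a)"
    using assms by (intro set_integral_mono phi_int) (auto intro!: mono simp: set_integrable_def)
  thus "Phi b - Phi a \<le> (b - a) * std_normal_density a"
    using assms by (simp add: Phi_diff set_integral_const m)
qed


lemma final:
  fixes p c1 c2 x1 x2 :: real
  assumes "sqrt (1/c1) = x1" "sqrt (1/c2) = x2" "0 \<le> p" "p \<le> 1"
    and K: "p*(Phi 2 - Phi x1) \<le> (1-p)*(Phi x2 - Phi 2)"
  shows "p * G c1 + (1 - p) * G c2 \<ge> G (1/4) \<and> p * G c1 + (1 - p) * (1/2) \<ge> G (1/4)"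
proof -
  define q where "q = 1 - Phi (sqrt 2)"
  have q0: "q \<ge> 0" using Phi_le1 by (simp add: q_def)
  have Gf: "G c = 1/2 - (1 - Phi (sqrt (1/c)))/(4*q)" for c
  proof -
    have "G c = (1/2) * (1 - (1/2) * ((1 - Phi (1 / sqrt c)) / q))" unfolding G_def q_def ..
    also have "\<dots> = 1/2 - (1/4) * ((1 - Phi (1 / sqrt c)) / q)" by (simp add: algebra_simps)
    also have "\<dots> = 1/2 - (1 - Phi (sqrt (1/c)))/(4*q)" by (simp add: real_sqrt_divide)
    finally show ?thesis .
  qed
  have s4: "sqrt (1/(1/4::real)) = 2" by simp
  define a where "a = 1 - Phi x1"
  define b where "b = 1 - Phi x2"
  define c where "c = 1 - Phi 2"
  have b0: "b \<ge> 0" using Phi_le1 by (simp add: b_def)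
  have I1: "p*a + (1-p)*b \<le> c" using K unfolding a_def b_def c_def by (simp add: algebra_simps)
  have I2: "p*a \<le> c"
  proof -
    have "(1-p)*b \<ge> 0" using b0 assms by simp
    thus ?thesis using I1 by linarith
  qed
  show ?thesis
  proof (cases "q = 0")
    case True thus ?thesis by (simp add: Gf diff_divide_distrib)
  next
    case False
    hence qp: "q > 0" using q0 by simp
    have e1: "p * G c1 + (1 - p) * G c2 = 1/2 - (p*a + (1-p)*b)/(4*q)"
      unfolding Gf assms(1,2) a_def b_def using qp by (simp add: field_simps)
    have e2: "p * G c1 + (1 - p) * (1/2) = 1/2 - (p*a)/(4*q)"
      unfolding Gf assms(1,2) a_def b_def using qp by (simp add: field_simps)
    have e3: "G (1/4) = 1/2 - c/(4*q)" unfolding Gf s4 c_def by simp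
    have "(p*a + (1-p)*b)/(4*q) \<le> c/(4*q)" using I1 qp by (simp add: divide_right_mono)
    moreover have "(p*a)/(4*q) \<le> c/(4*q)" using I2 qp by (simp add: divide_right_mono)
    ultimately show ?thesis unfolding e1 e2 e3 by linarith
  qed
qed


lemma keyA:
  fixes p x1 x2 e :: real
  assumes "0 \<le> x1" "x1 \<le> 2" "2 \<le> x2" "2 - x1 \<le> 3*e" "5*e \<le> x2 - 2" "0 \<le> e"
    "(x2^2 - x1^2)/2 \<le> 1/2" "0 \<le> p" "p \<le> 5/11"
  shows "p*(Phi 2 - Phi x1) \<le> (1-p)*(Phi x2 - Phi 2)"
proof -
  define y where "y = (x2^2 - x1^2)/2"
  have y0: "0 \<le> y" using assms unfolding y_def by (simp add: power_mono)
  have ey: "exp y \<le> 2" using exp_bound_half[of y] assms y0 unfolding y_def by simp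
  have f: "std_normal_density x1 = exp y * std_normal_density x2"
    unfolding y_def std_normal_density_def by (simp add: exp_add[symmetric] field_simps)
  have f2: "std_normal_density x1 \<le> 2 * std_normal_density x2"
    unfolding f by (rule mult_right_mono[OF ey]) simp
  have "p*(Phi 2 - Phi x1) \<le> p*((2 - x1) * std_normal_density x1)"
    using Phi_bounds(2)[of x1 2] assms by (simp add: mult_left_mono)
  also have "\<dots> \<le> p*((3*e) * (2 * std_normal_density x2))"
    using assms f2 by (intro mult_left_mono mult_mono) auto
  also have "\<dots> = (6*p) * (e * std_normal_density x2)" by simp
  also have "\<dots> \<le> (5*(1-p)) * (e * std_normal_density x2)"
    using assms by (intro mult_right_mono) auto
  also have "\<dots> = (1-p) * ((5*e) * std_normal_density x2)" by simp
  also have "\<dots> \<le> (1-p) * ((x2 - 2) * std_normal_density x2)"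
    using assms by (intro mult_left_mono mult_right_mono) auto
  also have "\<dots> \<le> (1-p)*(Phi x2 - Phi 2)"
    using Phi_bounds(1)[of 2 x2] assms by (intro mult_left_mono) auto
  finally show ?thesis .
qed

lemma exp_upper: "x < 1 \<Longrightarrow> exp x \<le> 1/(1-x)" for x :: real
proof -
  assume x: "x < 1"
  have "1 - x \<le> exp (-x)" using exp_ge_add_one_self[of "-x"] by simp
  hence "1 / exp (-x) \<le> 1/(1-x)" using x by (intro divide_left_mono) auto
  thus ?thesis by (simp add: exp_minus field_simps)
qed

lemma keyB: "Phi 2 - Phi (sqrt (25/7)) \<le> Phi (sqrt 5) - Phi 2"
proof -
  define x1 where "x1 = sqrt (25/7::real)"
  define x2 where "x2 = sqrt (5::real)"
  define z where "z = sqrt (9/2::real)"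
  define E where "E = std_normal_density 2"
  have E0: "E \<ge> 0" by (simp add: E_def)
  have x1s: "x1^2 = 25/7" by (simp add: x1_def)
  have x2s: "x2^2 = 5" by (simp add: x2_def)
  have zs: "z^2 = 9/2" by (simp add: z_def)
  have "exp (- (25/7) / 2) = exp (3/14) * exp (- 4 / 2::real)" by (simp add: exp_add[symmetric])
  hence f1: "std_normal_density x1 = exp (3/14) * E"
    unfolding E_def std_normal_density_def x1s by simp
  have "exp (- (9/2) / 2) = exp (-1/4) * exp (- 4 / 2::real)" by (simp add: exp_add[symmetric])
  hence fz: "std_normal_density z = exp (-1/4) * E"
    unfolding E_def std_normal_density_def zs by simp
  have "exp (- 5 / 2) = exp (-1/2) * exp (- 4 / 2::real)" by (simp add: exp_add[symmetric])
  hence f2: "std_normal_density x2 = exp (-1/2) * E"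
    unfolding E_def std_normal_density_def x2s by simp
  have a1: "exp (3/14::real) \<le> 14/11" using exp_upper[of "3/14"] by simp
  have a2: "3/4 \<le> exp (-1/4::real)" using exp_ge_add_one_self[of "-1/4::real"] by simp
  have a3: "1/2 \<le> exp (-1/2::real)" using exp_ge_add_one_self[of "-1/2::real"] by simp
  have x1l: "18897/10000 \<le> x1" unfolding x1_def by (rule real_le_rsqrt) (simp add: power2_eq_square)
  have x1u: "x1 \<le> 2" unfolding x1_def by (rule real_le_lsqrt) (auto simp: power2_eq_square)
  have x2l: "2236/1000 \<le> x2" unfolding x2_def by (rule real_le_rsqrt) (simp add: power2_eq_square)
  have zl: "21213/10000 \<le> z" unfolding z_def by (rule real_le_rsqrt) (simp add: power2_eq_square)
  have zu: "z \<le> 21214/10000" unfolding z_def by (rule real_le_lsqrt) (auto simp: power2_eq_square)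
  have "Phi 2 - Phi x1 \<le> (2 - x1) * std_normal_density x1"
    using Phi_bounds(2)[of x1 2] x1l x1u by simp
  also have "\<dots> = ((2 - x1) * exp (3/14)) * E" by (simp add: f1)
  also have "\<dots> \<le> ((1103/10000) * (14/11)) * E"
    using x1l x1u a1 E0 by (intro mult_right_mono mult_mono) auto
  also have "\<dots> \<le> ((1213/10000) * (3/4) + (1146/10000)*(1/2)) * E"
    using E0 by (intro mult_right_mono) auto
  also have "\<dots> \<le> ((z - 2) * exp (-1/4) + (x2 - z) * exp (-1/2)) * E"
    using zl zu x2l a2 a3 E0 by (intro mult_right_mono add_mono mult_mono) auto
  also have "\<dots> = (z - 2) * std_normal_density z + (x2 - z) * std_normal_density x2"
    by (simp add: fz f2 algebra_simps)
  also have "\<dots> \<le> (Phi z - Phi 2) + (Phi x2 - Phi z)"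
    using Phi_bounds(1)[of 2 z] Phi_bounds(1)[of z x2] zl zu x2l by (intro add_mono) auto
  finally show ?thesis unfolding x1_def x2_def by simp
qed


lemma p_eq: "k \<ge> 1 \<Longrightarrow> (2::real) powi (1 - int k) = (1/2)^(k-1)"
  unfolding power_int_def by (simp add: nat_diff_distrib power_inverse inverse_eq_divide)

lemma h1: "M \<ge> 1 \<Longrightarrow> 4*M/(M+3) \<le> (4::real)"
  by (simp add: field_simps)
lemma h2: "M \<ge> 1 \<Longrightarrow> (2-3/M)^2 \<le> 4*M/(M+3::real)"
  by (simp add: field_simps power2_eq_square)
lemma h3: "M > 5 \<Longrightarrow> 4 \<le> 4*M/(M-5::real)"
  by (simp add: field_simps)
lemma h4: "M > 5 \<Longrightarrow> (2+5/M)^2 \<le> 4*M/(M-5::real)"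
  by (simp add: field_simps power2_eq_square)
lemma h5: assumes "M \<ge> 49" shows "(4*M/(M-5) - 4*M/(M+3))/2 \<le> (1/2::real)"
proof -
  have "M*(M-34) \<ge> 49*15" using assms by (intro mult_mono) auto
  hence a: "(M-5)*(M+3) \<ge> 32*M" by (simp add: algebra_simps)
  have "4*M/(M-5) - 4*M/(M+3) = 32*M/((M-5)*(M+3))" using assms by (simp add: field_simps)
  also have "\<dots> \<le> 1" using a assms by simp
  finally show ?thesis by simp
qed

theorem lemma4:
  fixes k :: nat
  assumes "k \<ge> 2"
  defines "p \<equiv> (2::real) powi (1 - int k)"
  shows "p * G ((real k ^ 2 + real k + 1) / (2 * real k + 1) ^ 2)
           + (1 - p) * G ((real k ^ 2 + real k - 1) / (2 * real k + 1) ^ 2) \<ge> G (1/4)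
       \<and> p * G ((real k ^ 2 + real k + 1) / (2 * real k + 1) ^ 2)
           + (1 - p) * (1/2) \<ge> G (1/4)"
proof -
  have pe: "p = (1/2)^(k-1)" unfolding p_def using assms by (simp add: p_eq)
  have p0: "0 \<le> p" unfolding pe by simp
  show ?thesis
  proof (cases "k = 2")
    case True
    have ph: "p = 1/2" unfolding pe True by simp
    have c1: "(real k ^ 2 + real k + 1) / (2 * real k + 1) ^ 2 = 7/25" using True by simp
    have c2: "(real k ^ 2 + real k - 1) / (2 * real k + 1) ^ 2 = 1/5" using True by simp
    show ?thesis unfolding c1 c2 ph
      by (rule final[of _ "sqrt (25/7)" _ "sqrt 5"]) (use keyB in auto)
  next
    case False
    hence k3: "k \<ge> 3" using assms by simp
    have "(1/2::real)^(k-1) \<le> (1/2)^2" using k3 by (intro power_decreasing) auto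
    hence p4: "p \<le> 1/4" unfolding pe by (simp add: power2_eq_square)
    define M where "M = (2*real k+1)^2"
    have "(2*real k + 1) \<ge> 7" using k3 by simp
    hence "(2*real k+1)^2 \<ge> 7^2" by (intro power_mono) auto
    hence M49: "M \<ge> 49" unfolding M_def by simp
    have e1: "M + 3 = 4*(real k ^ 2 + real k + 1)" unfolding M_def by (simp add: algebra_simps power2_eq_square)
    have e2: "M - 5 = 4*(real k ^ 2 + real k - 1)" unfolding M_def by (simp add: algebra_simps power2_eq_square)
    have c1: "(real k ^ 2 + real k + 1) / (2 * real k + 1) ^ 2 = (M+3)/(4*M)"
      
    proof -
      have "(M+3)/(4*M) = (4*(real k ^ 2 + real k + 1))/(4*(2 * real k + 1) ^ 2)" unfolding e1 by (simp only: M_def)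
      also have "\<dots> = (real k ^ 2 + real k + 1)/((2 * real k + 1) ^ 2)" by (rule mult_divide_mult_cancel_left) simp
      finally show ?thesis by simp
    qed
    have c2: "(real k ^ 2 + real k - 1) / (2 * real k + 1) ^ 2 = (M-5)/(4*M)"
      
    proof -
      have "(M-5)/(4*M) = (4*(real k ^ 2 + real k - 1))/(4*(2 * real k + 1) ^ 2)" unfolding e2 by (simp only: M_def)
      also have "\<dots> = (real k ^ 2 + real k - 1)/((2 * real k + 1) ^ 2)" by (rule mult_divide_mult_cancel_left) simp
      finally show ?thesis by simp
    qed
    define x1 where "x1 = sqrt (4*M/(M+3))"
    define x2 where "x2 = sqrt (4*M/(M-5))"
    have s1: "sqrt (1/((M+3)/(4*M))) = x1" unfolding x1_def by simp
    have s2: "sqrt (1/((M-5)/(4*M))) = x2" unfolding x2_def by simp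
    have x1sq: "x1^2 = 4*M/(M+3)" unfolding x1_def using M49 by simp
    have x2sq: "x2^2 = 4*M/(M-5)" unfolding x2_def using M49 by simp
    have K: "p*(Phi 2 - Phi x1) \<le> (1-p)*(Phi x2 - Phi 2)"
    proof (rule keyA[where e = "1/M"])
      show "0 \<le> x1" unfolding x1_def using M49 by simp
      show "x1 \<le> 2" unfolding x1_def using M49 by (intro real_le_lsqrt) (auto simp: h1)
      show "2 \<le> x2" unfolding x2_def using M49 h3[of M] by (intro real_le_rsqrt) auto
      have "2 - 3/M \<le> x1" unfolding x1_def using M49 h2[of M] by (intro real_le_rsqrt) auto
      thus "2 - x1 \<le> 3 * (1/M)" by simp
      have "2 + 5/M \<le> x2" unfolding x2_def using M49 h4[of M] by (intro real_le_rsqrt) auto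
      thus "5 * (1/M) \<le> x2 - 2" by simp
      show "0 \<le> 1/M" using M49 by simp
      show "(x2^2 - x1^2)/2 \<le> 1/2" unfolding x1sq x2sq using h5 M49 by simp
      show "0 \<le> p" by (rule p0)
      show "p \<le> 5/11" using p4 by simp
    qed
    show ?thesis unfolding c1 c2
      by (rule final[OF s1 s2 p0 _ K]) (use p4 in simp)
  qed
qed

end
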